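(* Let $p_{d,k,n}$ denote the number of directed plateau polyhypercubes of dimension $d$, width $k$ and lateral area $n$. Then for $d\geq 3$, $k\geq 1$ and $n\geq (d-1)k$, $$p_{d,k,n}=\binom{n+(d-1)k-d}{n-(d-1)k}.$$
   Context: Work in $\mathbb{Z}^d$ with orthonormal coordinate system $(0,\vec{i_1},\dots,\vec{i_d})$; a cell is a unit hypercube of the lattice. A polyhypercube of dimension $d$ is a finite union of cells, connected through their $(d-1)$-dimensional faces, defined up to translation. Its width is the number of distinct values of the $\vec{i_1}$-coordinate taken by its cells; its strata are its intersections with the layers of constant $\vec{i_1}$-coordinate. A plateau is a stratum that is a hyperrectangle. An elementary step is a positive move of one unit along one axis. A polyhypercube is directed if every cell can be reached from a distinguished root cell by a path of cells of the polyhypercube using only elementary steps. A directed plateau polyhypercube is a directed polyhypercube all of whose strata are plateaus. The lateral area of a polyhypercube is the sum, over $2\leq l\leq d$, of the areas (numbers of unit squares) of the polyominoes obtained by projecting it onto the planes $(\vec{i_1},\vec{i_l})$. *)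

theory Defs
  imports Main
begin

text \<open>Cells of the lattice Z^d are represented by their lower corner, an integer list of
length d. Index 0 is the coordinate along i_1; index l-1 is the coordinate along i_l.\<close>

definition cells :: "nat \<Rightarrow> int list set" where
  "cells d = {c. length c = d}"

definition face_adj :: "nat \<Rightarrow> int list \<Rightarrow> int list \<Rightarrow> bool" where
  "face_adj d a b \<longleftrightarrow> length a = d \<and> length b = d \<and>
     (\<exists>i<d. \<bar>a ! i - b ! i\<bar> = 1 \<and> (\<forall>j<d. j \<noteq> i \<longrightarrow> a ! j = b ! j))"

definition polyhypercube :: "nat \<Rightarrow> int list set \<Rightarrow> bool" where
  "polyhypercube d P \<longleftrightarrow> finite P \<and> P \<noteq> {} \<and> P \<subseteq> cells d \<and>
     (\<forall>a\<in>P. \<forall>b\<in>P. (a, b) \<in> {(x, y). x \<in> P \<and> y \<in> P \<and> face_adj d x y}\<^sup>*)"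

definition elem_step :: "nat \<Rightarrow> int list \<Rightarrow> int list \<Rightarrow> bool" where
  "elem_step d a b \<longleftrightarrow> length a = d \<and> (\<exists>i<d. b = a[i := a ! i + 1])"

definition directed :: "nat \<Rightarrow> int list \<Rightarrow> int list set \<Rightarrow> bool" where
  "directed d r P \<longleftrightarrow> r \<in> P \<and>
     (\<forall>c\<in>P. (r, c) \<in> {(x, y). x \<in> P \<and> y \<in> P \<and> elem_step d x y}\<^sup>*)"

definition directed_polyhypercube :: "nat \<Rightarrow> int list set \<Rightarrow> bool" where
  "directed_polyhypercube d P \<longleftrightarrow> polyhypercube d P \<and> (\<exists>r. directed d r P)"

definition width :: "int list set \<Rightarrow> nat" where
  "width P = card ((\<lambda>c. c ! 0) ` P)"

definition stratum :: "int list set \<Rightarrow> int \<Rightarrow> int list set" where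
  "stratum P x = {c \<in> P. c ! 0 = x}"

definition plateau :: "nat \<Rightarrow> int \<Rightarrow> int list set \<Rightarrow> bool" where
  "plateau d x S \<longleftrightarrow> S \<noteq> {} \<and> (\<exists>lo hi :: nat \<Rightarrow> int.
     S = {c. length c = d \<and> c ! 0 = x \<and> (\<forall>i. 1 \<le> i \<and> i < d \<longrightarrow> lo i \<le> c ! i \<and> c ! i \<le> hi i)})"

definition directed_plateau_polyhypercube :: "nat \<Rightarrow> int list set \<Rightarrow> bool" where
  "directed_plateau_polyhypercube d P \<longleftrightarrow> directed_polyhypercube d P \<and>
     (\<forall>x \<in> (\<lambda>c. c ! 0) ` P. plateau d x (stratum P x))"

text \<open>Lateral area: sum over l = 2..d of the areas of the projections on the planes (i_1, i_l).\<close>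
definition lateral_area :: "nat \<Rightarrow> int list set \<Rightarrow> nat" where
  "lateral_area d P = (\<Sum>l\<in>{1..<d}. card ((\<lambda>c. (c ! 0, c ! l)) ` P))"

definition translate :: "int list \<Rightarrow> int list \<Rightarrow> int list" where
  "translate v c = map2 (+) c v"

definition transl_rel :: "nat \<Rightarrow> (int list set \<times> int list set) set" where
  "transl_rel d = {(P, Q). \<exists>v. length v = d \<and> Q = translate v ` P}"

definition p_count :: "nat \<Rightarrow> nat \<Rightarrow> nat \<Rightarrow> nat" where
  "p_count d k n = card ({P. directed_plateau_polyhypercube d P \<and> width P = k \<and>
      lateral_area d P = n} // transl_rel d)"

end

theory Submission
  imports Defs
begin


definition WC :: "nat \<Rightarrow> nat \<Rightarrow> (nat \<Rightarrow> nat) set" where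
  "WC M N = {f. (\<forall>i\<ge>M. f i = 0) \<and> sum f {..<M} = N}"

lemma WC_Suc_bij:
  "bij_betw (\<lambda>f. (f M, f(M := 0))) (WC (Suc M) N) (SIGMA t:{..N}. WC M (N - t))"
proof (rule bij_betw_byWitness[where f' = "\<lambda>(t, g). g(M := t)"])
  show "(\<lambda>f. (f M, f(M := 0))) ` WC (Suc M) N \<subseteq> (SIGMA t:{..N}. WC M (N - t))"
  proof (rule image_subsetI)
    fix f assume f: "f \<in> WC (Suc M) N"
    then have z: "\<forall>i\<ge>Suc M. f i = 0" and s: "sum f {..<Suc M} = N" by (simp_all add: WC_def)
    have s2: "sum f {..<M} + f M = N" using s by simp
    have "sum (f(M := 0)) {..<M} = sum f {..<M}" by (rule sum.cong) auto
    moreover have "\<forall>i\<ge>M. (f(M := 0)) i = 0" using z by (metis Suc_leI fun_upd_apply le_neq_implies_less)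
    ultimately have "f(M := 0) \<in> WC M (N - f M)" using s2 unfolding WC_def by simp
    moreover have "f M \<in> {..N}" using s2 by simp
    ultimately show "(f M, f(M := 0)) \<in> (SIGMA t:{..N}. WC M (N - t))" by simp
  qed
  show "(\<lambda>(t, g). g(M := t)) ` (SIGMA t:{..N}. WC M (N - t)) \<subseteq> WC (Suc M) N"
  proof (rule image_subsetI)
    fix p assume p: "p \<in> (SIGMA t:{..N}. WC M (N - t))"
    obtain t g where tg: "p = (t, g)" by (cases p)
    have t: "t \<le> N" and g: "g \<in> WC M (N - t)" using p tg by auto
    then have z: "\<forall>i\<ge>M. g i = 0" and s: "sum g {..<M} = N - t" by (simp_all add: WC_def)
    have "sum (g(M := t)) {..<M} = sum g {..<M}" by (rule sum.cong) auto
    then have "sum (g(M := t)) {..<Suc M} = N" using s t by simp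
    moreover have "\<forall>i\<ge>Suc M. (g(M := t)) i = 0" using z by simp
    ultimately have "g(M := t) \<in> WC (Suc M) N" unfolding WC_def by simp
    then show "(\<lambda>(t, g). g(M := t)) p \<in> WC (Suc M) N" using tg by simp
  qed
  show "\<forall>a\<in>WC (Suc M) N. (case (a M, a(M := 0)) of (t, g) \<Rightarrow> g(M := t)) = a"
    by simp
  show "\<forall>a'\<in>(SIGMA t:{..N}. WC M (N - t)). (\<lambda>f. (f M, f(M := 0))) (case a' of (t, g) \<Rightarrow> g(M := t)) = a'"
  proof
    fix p assume p: "p \<in> (SIGMA t:{..N}. WC M (N - t))"
    obtain t g where tg: "p = (t, g)" by (cases p)
    have "g M = 0" using p tg by (simp add: WC_def)
    then have "(g(M := t))(M := 0) = g" by (simp add: fun_upd_idem)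
    then show "(\<lambda>f. (f M, f(M := 0))) (case p of (t, g) \<Rightarrow> g(M := t)) = p" using tg by simp
  qed
qed

lemma finite_WC: "finite (WC M N)"
proof -
  have "WC M N \<subseteq> {f. (\<forall>i\<in>UNIV - {..<M}. f i = 0) \<and> (\<forall>i. f i \<in> {..N})}"
  proof (rule subsetI, rule CollectI, rule conjI)
    fix f assume f: "f \<in> WC M N"
    then show "\<forall>i\<in>UNIV - {..<M}. f i = 0" by (auto simp: WC_def)
    show "\<forall>i. f i \<in> {..N}"
    proof
    fix i show "f i \<in> {..N}"
    proof (cases "i < M")
      case True
      then have "f i \<le> sum f {..<M}" by (intro member_le_sum) auto
      with f show ?thesis by (auto simp: WC_def)
    qed (use f in \<open>auto simp: WC_def\<close>)
    qed
  qed
  moreover have "finite {f. (\<forall>i\<in>UNIV - {..<M}. f i = (0::nat)) \<and> (\<forall>i. f i \<in> {..N})}"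
  proof (rule finite_imageD)
    let ?A = "{f. (\<forall>i\<in>UNIV - {..<M}. f i = (0::nat)) \<and> (\<forall>i. f i \<in> {..N})}"
    show "inj_on (\<lambda>f. map f [0..<M]) ?A"
    proof (rule inj_onI)
      fix f g assume f: "f \<in> ?A" and g: "g \<in> ?A" and eq: "map f [0..<M] = map g [0..<M]"
      show "f = g"
      proof
        fix i show "f i = g i"
        proof (cases "i < M")
          case True
          then have "map f [0..<M] ! i = map g [0..<M] ! i" using eq by simp
          then show ?thesis using True by simp
        next
          case False then show ?thesis using f g by auto
        qed
      qed
    qed
    have "(\<lambda>f. map f [0..<M]) ` ?A \<subseteq> {xs. set xs \<subseteq> {..N} \<and> length xs = M}" by auto
    moreover have "finite {xs. set xs \<subseteq> {..N} \<and> length xs = M}"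
      by (rule finite_lists_length_eq) auto
    ultimately show "finite ((\<lambda>f. map f [0..<M]) ` ?A)" by (rule finite_subset)
  qed
  ultimately show ?thesis by (rule finite_subset)
qed

lemma card_WC: "card (WC (Suc M) N) = (N + M) choose N"
proof (induction M arbitrary: N)
  case 0
  have "WC (Suc 0) N = {(\<lambda>i. 0)(0 := N)}"
    by (auto simp: WC_def)
  then show ?case by simp
next
  case (Suc M)
  have "card (WC (Suc (Suc M)) N) = card (SIGMA t:{..N}. WC (Suc M) (N - t))"
    by (rule bij_betw_same_card[OF WC_Suc_bij])
  also have "\<dots> = (\<Sum>t\<le>N. card (WC (Suc M) (N - t)))"
    by (rule card_SigmaI) (auto simp: finite_WC)
  also have "\<dots> = (\<Sum>t\<le>N. (N - t + M) choose (N - t))"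
    using Suc by simp
  also have "\<dots> = (\<Sum>s\<le>N. (M + s) choose s)"
    using sum.atLeastAtMost_rev[of "\<lambda>s. (M + s) choose s" 0 N]
    by (simp add: atLeast0AtMost add.commute)
  also have "\<dots> = Suc (M + N) choose N"
    by (rule sum_choose_lower)
  also have "\<dots> = (N + Suc M) choose N"
    by (simp add: add.commute)
  finally show ?case .
qed



definition box :: "nat \<Rightarrow> int \<Rightarrow> (nat \<Rightarrow> int) \<Rightarrow> (nat \<Rightarrow> int) \<Rightarrow> int list set" where
  "box d x lo hi = {c. length c = d \<and> c!0 = x \<and> (\<forall>i. 1 \<le> i \<and> i < d \<longrightarrow> lo i \<le> c!i \<and> c!i \<le> hi i)}"

lemma plateau_box: "plateau d x S \<longleftrightarrow> S \<noteq> {} \<and> (\<exists>lo hi. S = box d x lo hi)"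
  unfolding plateau_def box_def by simp

definition mkc :: "nat \<Rightarrow> (nat \<Rightarrow> int) \<Rightarrow> int list" where "mkc d g = map g [0..<d]"

lemma mkc_len[simp]: "length (mkc d g) = d" by (simp add: mkc_def)
lemma mkc_nth[simp]: "i < d \<Longrightarrow> mkc d g ! i = g i" by (simp add: mkc_def)

lemma mkc_in_box:
  assumes "0 < d" "\<And>i. 1 \<le> i \<Longrightarrow> i < d \<Longrightarrow> lo i \<le> g i \<and> g i \<le> hi i" "g 0 = x"
  shows "mkc d g \<in> box d x lo hi"
  using assms by (auto simp: box_def)

lemma box_ne_iff:
  assumes "0 < d"
  shows "box d x lo hi \<noteq> {} \<longleftrightarrow> (\<forall>i. 1 \<le> i \<and> i < d \<longrightarrow> lo i \<le> hi i)"
proof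
  assume "box d x lo hi \<noteq> {}"
  then obtain c where "c \<in> box d x lo hi" by auto
  then show "\<forall>i. 1 \<le> i \<and> i < d \<longrightarrow> lo i \<le> hi i" by (force simp: box_def)
next
  assume "\<forall>i. 1 \<le> i \<and> i < d \<longrightarrow> lo i \<le> hi i"
  then have "mkc d (\<lambda>i. if i = 0 then x else lo i) \<in> box d x lo hi"
    using assms by (intro mkc_in_box) auto
  then show "box d x lo hi \<noteq> {}" by auto
qed

lemma box_sub:
  assumes "0 < d" "box d x lo hi \<subseteq> box d x lo' hi'" "box d x lo hi \<noteq> {}" "1 \<le> l" "l < d"
  shows "lo' l \<le> lo l \<and> hi l \<le> hi' l"
proof -
  have ne: "\<forall>i. 1 \<le> i \<and> i < d \<longrightarrow> lo i \<le> hi i" using assms box_ne_iff by blast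
  have "mkc d (\<lambda>i. if i = 0 then x else lo i) \<in> box d x lo hi"
    using assms ne by (intro mkc_in_box) auto
  then have "mkc d (\<lambda>i. if i = 0 then x else lo i) \<in> box d x lo' hi'" using assms by auto
  then have 1: "lo' l \<le> lo l" using assms by (auto simp: box_def)
  have "mkc d (\<lambda>i. if i = 0 then x else hi i) \<in> box d x lo hi"
    using assms ne by (intro mkc_in_box) auto
  then have "mkc d (\<lambda>i. if i = 0 then x else hi i) \<in> box d x lo' hi'" using assms by auto
  then have 2: "hi l \<le> hi' l" using assms by (auto simp: box_def)
  from 1 2 show ?thesis ..
qed

lemma box_eqD:
  assumes "0 < d" "box d x lo hi = box d x lo' hi'" "box d x lo hi \<noteq> {}" "1 \<le> l" "l < d"
  shows "lo l = lo' l \<and> hi l = hi' l"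
  using box_sub[OF assms(1) equalityD1[OF assms(2)] assms(3-5)]
    box_sub[OF assms(1) equalityD2[OF assms(2)] _ assms(4-5)] assms(2,3)
  by fastforce

lemma box_cong:
  "(\<And>l. 1 \<le> l \<Longrightarrow> l < d \<Longrightarrow> lo l = lo' l \<and> hi l = hi' l) \<Longrightarrow> box d x lo hi = box d x lo' hi'"
  unfolding box_def by auto

lemma finite_box: "finite (box d x lo hi)"
proof -
  let ?A = "{x} \<union> (\<Union>i<d. {lo i..hi i})"
  have "box d x lo hi \<subseteq> {xs. set xs \<subseteq> ?A \<and> length xs = d}"
  proof (rule subsetI, rule CollectI, rule conjI)
    fix c assume c: "c \<in> box d x lo hi"
    show "set c \<subseteq> ?A"
    proof
      fix y assume "y \<in> set c"
      then obtain i where i: "i < length c" "y = c!i" by (auto simp: in_set_conv_nth)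
      show "y \<in> ?A"
      proof (cases "i = 0")
        case True then show ?thesis using c i by (auto simp: box_def)
      next
        case False
        then have "lo i \<le> c!i \<and> c!i \<le> hi i" "i < d" using c i by (auto simp: box_def)
        then show ?thesis using i by auto
      qed
    qed
    show "length c = d" using c by (simp add: box_def)
  qed
  moreover have "finite {xs. set xs \<subseteq> ?A \<and> length xs = d}"
    by (rule finite_lists_length_eq) auto
  ultimately show ?thesis by (rule finite_subset)
qed

definition ER :: "nat \<Rightarrow> int list set \<Rightarrow> (int list \<times> int list) set" where
  "ER d P = {(x, y). x \<in> P \<and> y \<in> P \<and> elem_step d x y}"

lemma directed_ER: "directed d r P \<longleftrightarrow> r \<in> P \<and> (\<forall>c\<in>P. (r, c) \<in> (ER d P)\<^sup>*)"
  by (simp add: directed_def ER_def)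

lemma ER_mono:
  assumes "(a, b) \<in> (ER d P)\<^sup>*" "length a = d"
  shows "length b = d \<and> (\<forall>i<d. a!i \<le> b!i)"
  using assms(1)
proof (induction rule: rtrancl_induct)
  case base then show ?case using assms(2) by simp
next
  case (step y z)
  then obtain j where j: "j < d" "z = y[j := y!j + 1]" "length y = d"
    by (auto simp: ER_def elem_step_def)
  have "\<forall>i<d. y!i \<le> z!i" using j by (simp add: nth_list_update)
  then show ?case using step j by fastforce
qed

lemma reach_conv:
  assumes "c \<in> P" "length c = d"
  shows "a \<in> P \<Longrightarrow> length a = d \<Longrightarrow> (\<forall>i<d. a!i \<le> c!i) \<Longrightarrow>
    (\<forall>y. length y = d \<and> (\<forall>i<d. a!i \<le> y!i \<and> y!i \<le> c!i) \<longrightarrow> y \<in> P) \<Longrightarrow> (a, c) \<in> (ER d P)\<^sup>*"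
proof (induction "\<Sum>i<d. nat (c!i - a!i)" arbitrary: a rule: less_induct)
  case (less a)
  show ?case
  proof (cases "\<forall>i<d. a!i = c!i")
    case True
    then have "a = c" using less.prems assms by (simp add: nth_equalityI)
    then show ?thesis by simp
  next
    case False
    then obtain j where j: "j < d" "a!j < c!j" using less.prems by force
    define a' where "a' = a[j := a!j + 1]"
    have len: "length a' = d" using less.prems by (simp add: a'_def)
    have a'i: "\<And>i. i < d \<Longrightarrow> a'!i = (if i = j then a!i + 1 else a!i)"
      using less.prems by (simp add: a'_def nth_list_update)
    have le: "\<forall>i<d. a'!i \<le> c!i" using a'i j less.prems by auto
    have aa': "\<forall>i<d. a!i \<le> a'!i" using a'i by simp
    have conv': "\<forall>y. length y = d \<and> (\<forall>i<d. a'!i \<le> y!i \<and> y!i \<le> c!i) \<longrightarrow> y \<in> P"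
    proof (intro allI impI)
      fix y assume y: "length y = d \<and> (\<forall>i<d. a'!i \<le> y!i \<and> y!i \<le> c!i)"
      then have "\<forall>i<d. a!i \<le> y!i \<and> y!i \<le> c!i" using aa' by (meson order_trans)
      then show "y \<in> P" using y less.prems(4) by blast
    qed
    have "a' \<in> P" using conv' len le by blast
    have step: "(a, a') \<in> ER d P"
      using \<open>a' \<in> P\<close> less.prems j by (auto simp: ER_def elem_step_def a'_def)
    have lessD: "(\<Sum>i<d. nat (c!i - a'!i)) < (\<Sum>i<d. nat (c!i - a!i))"
    proof (rule sum_strict_mono_ex1)
      show "\<forall>i\<in>{..<d}. nat (c!i - a'!i) \<le> nat (c!i - a!i)" using a'i by auto
      show "\<exists>i\<in>{..<d}. nat (c!i - a'!i) < nat (c!i - a!i)" using a'i j by auto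
    qed simp
    have "(a', c) \<in> (ER d P)\<^sup>*"
      using less.hyps[OF lessD \<open>a' \<in> P\<close> len le conv'] .
    then show ?thesis using step by (blast intro: converse_rtrancl_into_rtrancl)
  qed
qed

lemma elem_step_face: "elem_step d a b \<Longrightarrow> face_adj d a b"
  unfolding elem_step_def face_adj_def
  by (auto simp: nth_list_update)

lemma directed_connected:
  assumes "directed d r P" "a \<in> P" "b \<in> P"
  shows "(a, b) \<in> {(x, y). x \<in> P \<and> y \<in> P \<and> face_adj d x y}\<^sup>*"
proof -
  let ?F = "{(x, y). x \<in> P \<and> y \<in> P \<and> face_adj d x y}"
  have sub: "ER d P \<subseteq> ?F" using elem_step_face by (auto simp: ER_def)
  have symF: "?F\<inverse> = ?F" by (auto simp: face_adj_def abs_minus_commute)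
  have "(r, a) \<in> ?F\<^sup>*" "(r, b) \<in> ?F\<^sup>*"
    using assms rtrancl_mono[OF sub] by (auto simp: directed_ER)
  then have "(a, r) \<in> (?F\<inverse>)\<^sup>*" "(r, b) \<in> ?F\<^sup>*" by (auto intro: rtrancl_converseI)
  then show ?thesis using symF by simp
qed

lemma directed_imp_polyhypercube:
  "directed d r P \<Longrightarrow> finite P \<Longrightarrow> P \<subseteq> cells d \<Longrightarrow> polyhypercube d P"
  unfolding polyhypercube_def using directed_connected by (auto simp: directed_def)



definition LO :: "nat \<Rightarrow> (nat \<Rightarrow> nat) \<Rightarrow> nat \<Rightarrow> nat \<Rightarrow> int" where
  "LO k f j l = int (\<Sum>i<j. f ((l-1)*(2*k-1) + 2*i + 1))"

definition HI :: "nat \<Rightarrow> (nat \<Rightarrow> nat) \<Rightarrow> nat \<Rightarrow> nat \<Rightarrow> int" where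
  "HI k f j l = LO k f j l + int (f ((l-1)*(2*k-1) + 2*j))
     + (if Suc j < k then int (f ((l-1)*(2*k-1) + 2*j + 1)) else 0)"

definition PP :: "nat \<Rightarrow> nat \<Rightarrow> (nat \<Rightarrow> nat) \<Rightarrow> int list set" where
  "PP d k f = (\<Union>j<k. box d (int j) (LO k f j) (HI k f j))"

lemma LO_0[simp]: "LO k f 0 l = 0" by (simp add: LO_def)
lemma LO_Suc: "LO k f (Suc j) l = LO k f j l + int (f ((l-1)*(2*k-1) + 2*j + 1))"
  by (simp add: LO_def)
lemma LO_HI: "LO k f j l \<le> HI k f j l" by (simp add: HI_def)
lemma LO_chain: "Suc j < k \<Longrightarrow> LO k f j l \<le> LO k f (Suc j) l \<and> LO k f (Suc j) l \<le> HI k f j l"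
  by (simp add: LO_Suc HI_def)

lemma box_ne_PP: "0 < d \<Longrightarrow> box d x (LO k f j) (HI k f j) \<noteq> {}"
  by (simp add: box_ne_iff LO_HI)

lemma stratum_PP:
  assumes "j < k"
  shows "stratum (PP d k f) (int j) = box d (int j) (LO k f j) (HI k f j)"
  using assms by (auto simp: stratum_def PP_def box_def)

lemma proj0_PP:
  assumes "0 < d"
  shows "(\<lambda>c. c!0) ` PP d k f = int ` {..<k}"
proof
  show "(\<lambda>c. c!0) ` PP d k f \<subseteq> int ` {..<k}" by (auto simp: PP_def box_def)
  show "int ` {..<k} \<subseteq> (\<lambda>c. c!0) ` PP d k f"
  proof
    fix x assume "x \<in> int ` {..<k}"
    then obtain j where j: "j < k" "x = int j" by auto
    then obtain c where "c \<in> box d (int j) (LO k f j) (HI k f j)"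
      using box_ne_PP[OF assms] by blast
    then show "x \<in> (\<lambda>c. c!0) ` PP d k f" using j
      by (auto simp: PP_def box_def intro!: image_eqI[where x = c])
  qed
qed

lemma width_PP: "0 < d \<Longrightarrow> width (PP d k f) = k"
  by (simp add: width_def proj0_PP card_image)

lemma finite_PP: "finite (PP d k f)"
  by (simp add: PP_def finite_box)

lemma PP_cells: "PP d k f \<subseteq> cells d"
  by (auto simp: PP_def box_def cells_def)

definition zero :: "nat \<Rightarrow> int list" where "zero d = replicate d 0"

lemma zero_in_PP: "0 < d \<Longrightarrow> 0 < k \<Longrightarrow> zero d \<in> PP d k f"
  unfolding PP_def
  by (rule UN_I[where a = 0]) (auto simp: box_def zero_def LO_HI[of k f 0, simplified])

lemma directed_PP:
  assumes "0 < d" "0 < k"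
  shows "directed d (zero d) (PP d k f)"
proof -
  let ?P = "PP d k f"
  let ?B = "\<lambda>j. box d (int j) (LO k f j) (HI k f j)"
  have BP: "\<And>j. j < k \<Longrightarrow> ?B j \<subseteq> ?P" by (auto simp: PP_def)
  have inbox: "\<And>j a c. j < k \<Longrightarrow> a \<in> ?B j \<Longrightarrow> c \<in> ?B j \<Longrightarrow> (\<forall>i<d. a!i \<le> c!i) \<Longrightarrow> (a, c) \<in> (ER d ?P)\<^sup>*"
  proof -
    fix j a c assume j: "j < k" and a: "a \<in> ?B j" and c: "c \<in> ?B j" and le: "\<forall>i<d. a!i \<le> c!i"
    show "(a, c) \<in> (ER d ?P)\<^sup>*"
    proof (rule reach_conv)
      show "c \<in> ?P" "a \<in> ?P" using BP j a c by auto
      show "length c = d" "length a = d" using a c by (auto simp: box_def)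
      show "\<forall>i<d. a!i \<le> c!i" by fact
      show "\<forall>y. length y = d \<and> (\<forall>i<d. a!i \<le> y!i \<and> y!i \<le> c!i) \<longrightarrow> y \<in> ?P"
      proof (intro allI impI)
        fix y assume y: "length y = d \<and> (\<forall>i<d. a!i \<le> y!i \<and> y!i \<le> c!i)"
        have "y \<in> ?B j"
          unfolding box_def
        proof (intro CollectI conjI allI impI)
          show "length y = d" using y by simp
          show "y!0 = int j" using y a c assms(1) unfolding box_def by force
          fix i assume "1 \<le> i \<and> i < d"
          then show "LO k f j i \<le> y!i" "y!i \<le> HI k f j i" using y a c unfolding box_def by force+
        qed
        then show "y \<in> ?P" using BP j by auto
      qed
    qed
  qed
  have "\<forall>c\<in>?B j. (zero d, c) \<in> (ER d ?P)\<^sup>*" if "j < k" for j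
    using that
  proof (induction j)
    case 0
    have z: "zero d \<in> ?B 0" using assms by (auto simp: box_def zero_def LO_HI[of k f 0, simplified])
    show ?case
    proof
      fix c assume c: "c \<in> ?B 0"
      show "(zero d, c) \<in> (ER d ?P)\<^sup>*"
      proof (rule inbox[OF 0 z c], intro allI impI)
        fix i assume "i < d"
        then show "zero d ! i \<le> c!i" using c by (cases "i = 0") (auto simp: box_def zero_def)
      qed
    qed
  next
    case (Suc j)
    define a where "a = mkc d (\<lambda>i. if i = 0 then int (Suc j) else LO k f (Suc j) i)"
    define a' where "a' = mkc d (\<lambda>i. if i = 0 then int j else LO k f (Suc j) i)"
    have aB: "a \<in> ?B (Suc j)" unfolding a_def using assms by (intro mkc_in_box) (auto simp: LO_HI)
    have a'B: "a' \<in> ?B j" unfolding a'_def using assms LO_chain[OF Suc.prems]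
      by (intro mkc_in_box) auto
    have "a = a'[0 := a'!0 + 1]"
      unfolding a_def a'_def using assms by (intro nth_equalityI) (auto simp: nth_list_update)
    then have "elem_step d a' a" using assms unfolding elem_step_def a'_def by auto
    moreover have "a \<in> ?P" "a' \<in> ?P" using aB a'B BP[OF Suc.prems] BP[of j] Suc.prems by auto
    ultimately have st: "(a', a) \<in> ER d ?P" by (simp add: ER_def)
    have "(zero d, a') \<in> (ER d ?P)\<^sup>*" using Suc a'B by auto
    with st have za: "(zero d, a) \<in> (ER d ?P)\<^sup>*" by (blast intro: rtrancl_into_rtrancl)
    show ?case
    proof
      fix c assume c: "c \<in> ?B (Suc j)"
      have "(a, c) \<in> (ER d ?P)\<^sup>*"
      proof (rule inbox[OF Suc.prems aB c])
        show "\<forall>i<d. a!i \<le> c!i" using c unfolding a_def box_def by auto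
      qed
      with za show "(zero d, c) \<in> (ER d ?P)\<^sup>*" by (rule rtrancl_trans)
    qed
  qed
  then show ?thesis
    unfolding directed_ER using zero_in_PP[OF assms] by (auto simp: PP_def)
qed



lemma proj_PP:
  assumes "1 \<le> l" "l < d"
  shows "(\<lambda>c. (c!0, c!l)) ` PP d k f = (\<Union>j<k. {int j} \<times> {LO k f j l..HI k f j l})"
proof
  show "(\<lambda>c. (c!0, c!l)) ` PP d k f \<subseteq> (\<Union>j<k. {int j} \<times> {LO k f j l..HI k f j l})"
    using assms by (auto simp: PP_def box_def)
  show "(\<Union>j<k. {int j} \<times> {LO k f j l..HI k f j l}) \<subseteq> (\<lambda>c. (c!0, c!l)) ` PP d k f"
  proof (clarify)
    fix j t assume j: "j < k" and t: "t \<in> {LO k f j l..HI k f j l}"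
    define c where "c = mkc d (\<lambda>i. if i = 0 then int j else if i = l then t else LO k f j i)"
    have "c \<in> box d (int j) (LO k f j) (HI k f j)"
      unfolding c_def using assms t by (intro mkc_in_box) (auto simp: LO_HI)
    then have "c \<in> PP d k f" using j by (auto simp: PP_def)
    moreover have "(int j, t) = (c!0, c!l)" using assms by (simp add: c_def)
    ultimately show "(int j, t) \<in> (\<lambda>c. (c!0, c!l)) ` PP d k f" by blast
  qed
qed

lemma sum_pairs: "(\<Sum>j<n. g (2*j) + g (2*j+1)) = (\<Sum>i<2*n. (g (i::nat) :: nat))"
  by (induction n) auto

lemma sum_shift_K: "sum g {a..<a+K} = (\<Sum>i<K. (g (a+i::nat) :: nat))"
  by (induction K) auto

lemma card_proj_PP:
  assumes "1 \<le> l" "l < d" "0 < k"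
  shows "card ((\<lambda>c. (c!0, c!l)) ` PP d k f) = k + (\<Sum>i<2*k-1. f ((l-1)*(2*k-1) + i))"
proof -
  let ?b = "(l-1)*(2*k-1)"
  have "card ((\<lambda>c. (c!0, c!l)) ` PP d k f) = (\<Sum>j<k. card ({int j} \<times> {LO k f j l..HI k f j l}))"
    unfolding proj_PP[OF assms(1,2)] by (rule card_UN_disjoint) auto
  also have "\<dots> = (\<Sum>j<k. f (?b + 2*j) + (if Suc j < k then f (?b + 2*j + 1) else 0) + 1)"
    by (rule sum.cong) (auto simp: card_cartesian_product HI_def)
  also have "\<dots> = k + (\<Sum>i<2*k-1. f (?b + i))"
  proof -
    obtain k' where k: "k = Suc k'" using assms(3) by (cases k) auto
    define F where "F j = f (?b + 2*j)" for j
    define G where "G j = f (?b + 2*j + 1)" for j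
    have "(\<Sum>j<k. f (?b + 2*j) + (if Suc j < k then f (?b + 2*j + 1) else 0) + 1)
        = (\<Sum>j<k'. F j + (if Suc j < k then G j else 0) + 1) + (F k' + 1)"
      unfolding k F_def G_def by simp
    also have "(\<Sum>j<k'. F j + (if Suc j < k then G j else 0) + 1) = (\<Sum>j<k'. (F j + G j) + 1)"
      by (rule sum.cong) (auto simp: k)
    also have "\<dots> = (\<Sum>j<k'. F j + G j) + k'"
      unfolding sum.distrib by simp
    also have "(\<Sum>j<k'. F j + G j) = (\<Sum>i<2*k'. f (?b + i))"
      using sum_pairs[of "\<lambda>i. f (?b + i)" k'] by (simp add: add.assoc F_def G_def)
    finally show ?thesis unfolding k F_def by simp
  qed
  finally show ?thesis .
qed

lemma area_PP:
  assumes "0 < k" "1 \<le> d"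
  shows "lateral_area d (PP d k f) = (d-1)*k + sum f {..<(d-1)*(2*k-1)}"
proof -
  let ?K = "2*k-1"
  have "lateral_area d (PP d k f) = (\<Sum>l\<in>{1..<d}. k + (\<Sum>i<?K. f ((l-1)*?K + i)))"
    unfolding lateral_area_def by (rule sum.cong) (use assms card_proj_PP in auto)
  also have "\<dots> = (\<Sum>l<d-1. k + (\<Sum>i<?K. f (l*?K + i)))"
  proof -
    obtain d' where d: "d = Suc d'" using assms by (cases d) auto
    show ?thesis unfolding d using sum.shift_bounds_Suc_ivl[of "\<lambda>l. k + (\<Sum>i<?K. f ((l-1)*?K + i))" 0 d']
      by (simp add: atLeast0LessThan)
  qed
  also have "\<dots> = (d-1)*k + (\<Sum>l<d-1. sum f {l*?K..<l*?K+?K})"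
    by (simp add: sum.distrib sum_shift_K)
  also have "\<dots> = (d-1)*k + sum f {..<(d-1)*?K}"
    by (simp add: sum.nat_group)
  finally show ?thesis .
qed

lemma dpp_PP:
  assumes "0 < k" "0 < d"
  shows "directed_plateau_polyhypercube d (PP d k f)"
  unfolding directed_plateau_polyhypercube_def directed_polyhypercube_def
proof (intro conjI ballI)
  show "polyhypercube d (PP d k f)"
    using directed_imp_polyhypercube directed_PP[OF assms(2,1)] finite_PP PP_cells by blast
  show "\<exists>r. directed d r (PP d k f)" using directed_PP[OF assms(2,1)] by blast
  fix x assume "x \<in> (\<lambda>c. c!0) ` PP d k f"
  then obtain j where j: "j < k" "x = int j" using proj0_PP[OF assms(2)] by auto
  show "plateau d x (stratum (PP d k f) x)"
    unfolding plateau_box j(2) stratum_PP[OF j(1)] using box_ne_PP[OF assms(2)] by blast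
qed



lemma decode_idx:
  fixes K l d r :: nat
  assumes "0 < K" "1 \<le> l" "l < d" "r < K"
  shows "(l-1)*K + r < (d-1)*K" "((l-1)*K + r) div K = l - 1" "((l-1)*K + r) mod K = r"
proof -
  have "(l-1)*K + r < (l-1)*K + K" by (rule add_strict_left_mono[OF assms(4)])
  also have "\<dots> = l*K" using assms by (cases l) auto
  also have "\<dots> \<le> (d-1)*K" using assms by (intro mult_right_mono) auto
  finally show "(l-1)*K + r < (d-1)*K" .
  show "((l-1)*K + r) div K = l - 1" "((l-1)*K + r) mod K = r" using assms by auto
qed

lemma PP_LO_HI_eq:
  assumes "0 < d" "PP d k f = PP d k g" "j < k" "1 \<le> l" "l < d"
  shows "LO k f j l = LO k g j l \<and> HI k f j l = HI k g j l"
proof -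
  have "box d (int j) (LO k f j) (HI k f j) = box d (int j) (LO k g j) (HI k g j)"
    using stratum_PP[OF assms(3), of d f] stratum_PP[OF assms(3), of d g] assms(2) by simp
  then show ?thesis using box_eqD[OF assms(1) _ box_ne_PP[OF assms(1)] assms(4,5)] by blast
qed

lemma PP_inj:
  assumes "0 < d" "0 < k" "PP d k f = PP d k g"
    "\<forall>i\<ge>(d-1)*(2*k-1). f i = 0" "\<forall>i\<ge>(d-1)*(2*k-1). g i = 0"
  shows "f = g"
proof
  fix i
  let ?K = "2*k-1"
  have K: "0 < ?K" using assms by simp
  have odd: "f ((l-1)*?K + 2*j + 1) = g ((l-1)*?K + 2*j + 1)" if "1 \<le> l" "l < d" "Suc j < k" for l j
  proof -
    have "LO k f (Suc j) l - LO k f j l = LO k g (Suc j) l - LO k g j l"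
      using PP_LO_HI_eq[OF assms(1,3) _ that(1,2)] that by (metis Suc_lessD)
    then show ?thesis by (simp add: LO_Suc)
  qed
  have even: "f ((l-1)*?K + 2*j) = g ((l-1)*?K + 2*j)" if "1 \<le> l" "l < d" "j < k" for l j
  proof -
    have "HI k f j l - LO k f j l = HI k g j l - LO k g j l"
      using PP_LO_HI_eq[OF assms(1,3) that(3,1,2)] by simp
    then show ?thesis using odd[OF that(1,2)] by (simp add: HI_def split: if_splits)
  qed
  show "f i = g i"
  proof (cases "i < (d-1)*?K")
    case False then show ?thesis using assms by simp
  next
    case True
    define q where "q = i div ?K"
    define r where "r = i mod ?K"
    have i: "i = q*?K + r" unfolding q_def r_def by (rule div_mult_mod_eq[symmetric])
    have q: "q < d - 1" using True K unfolding q_def by (simp add: div_less_iff_less_mult)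
    have r: "r < ?K" using K by (simp add: r_def)
    have ql: "q = (q+1) - 1" by simp
    show ?thesis
    proof (cases "even r")
      case True
      then obtain j where j: "r = 2*j" by (auto elim: evenE)
      then have "j < k" using r by simp
      then show ?thesis using even[of "q+1" j] q i j by simp
    next
      case False
      then obtain j where j: "r = 2*j+1" by (auto elim: oddE)
      then have "Suc j < k" using r by simp
      then show ?thesis using odd[of "q+1" j] q i j by simp
    qed
  qed
qed



lemma zero_len[simp]: "length (zero d) = d" by (simp add: zero_def)
lemma zero_nth[simp]: "i < d \<Longrightarrow> zero d ! i = 0" by (simp add: zero_def)

lemma PP_surj:
  assumes d: "2 \<le> d" and k: "0 < k"
    and P: "directed_plateau_polyhypercube d P" "directed d (zero d) P" "width P = k"
  shows "\<exists>f. (\<forall>i\<ge>(d-1)*(2*k-1). f i = 0) \<and> P = PP d k f"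
proof -
  let ?K = "2*k-1"
  let ?E = "ER d P"
  have d0: "0 < d" using d by simp
  have fin: "finite P" and cel: "P \<subseteq> cells d"
    using P(1) by (auto simp: directed_plateau_polyhypercube_def directed_polyhypercube_def polyhypercube_def)
  have zP: "zero d \<in> P" and reach: "\<forall>c\<in>P. (zero d, c) \<in> ?E\<^sup>*"
    using P(2) by (auto simp: directed_ER)
  have nonneg: "\<forall>c\<in>P. length c = d \<and> (\<forall>i<d. 0 \<le> c!i)"
    using reach ER_mono[of "zero d" _ d P] by fastforce
  define X where "X = (\<lambda>c. c!0) ` P"
  have down: "\<forall>x. 0 \<le> x \<and> x \<le> c!0 \<longrightarrow> x \<in> X" if "(zero d, c) \<in> ?E\<^sup>*" for c
    using that
  proof (induction rule: rtrancl_induct)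
    case base
    then show ?case using zP d0 by (auto simp: X_def intro!: image_eqI[where x = "zero d"])
  next
    case (step y z)
    then obtain j where j: "j < d" "z = y[j := y!j + 1]" "length y = d" "z \<in> P"
      by (auto simp: ER_def elem_step_def)
    have z0: "z!0 = y!0 + (if j = 0 then 1 else 0)" using j d0 by (auto simp: nth_list_update)
    show ?case
    proof (intro allI impI)
      fix x assume x: "0 \<le> x \<and> x \<le> z!0"
      show "x \<in> X"
      proof (cases "x \<le> y!0")
        case True then show ?thesis using step.IH x by blast
      next
        case False
        then have "x = z!0" using x z0 by (auto split: if_splits)
        then show ?thesis using j by (auto simp: X_def)
      qed
    qed
  qed
  have finX: "finite X" using fin by (simp add: X_def)
  have cardX: "card X = k" using P(3) by (simp add: width_def X_def)
  have Xsub: "X \<subseteq> int ` {..<k}"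
  proof
    fix x assume x: "x \<in> X"
    then obtain c where c: "c \<in> P" "x = c!0" by (auto simp: X_def)
    have x0: "0 \<le> x" using nonneg c d0 by auto
    have "{0..x} \<subseteq> X" using down[of c] reach c by auto
    then have "card {0..x} \<le> card X" using finX by (rule card_mono[rotated])
    then have "x < int k" using cardX x0 by simp
    then show "x \<in> int ` {..<k}" using x0 by (auto intro!: image_eqI[where x = "nat x"])
  qed
  have Xeq: "X = int ` {..<k}"
    using card_subset_eq[OF _ Xsub] cardX by (simp add: card_image)
  have "\<forall>j\<in>{..<k}. \<exists>p. stratum P (int j) = box d (int j) (fst p) (snd p) \<and> stratum P (int j) \<noteq> {}"
  proof
    fix j assume "j \<in> {..<k}"
    then have "int j \<in> (\<lambda>c. c!0) ` P" using Xeq by (auto simp: X_def)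
    then have "plateau d (int j) (stratum P (int j))"
      using P(1) by (auto simp: directed_plateau_polyhypercube_def)
    then show "\<exists>p. stratum P (int j) = box d (int j) (fst p) (snd p) \<and> stratum P (int j) \<noteq> {}"
      unfolding plateau_box by auto
  qed
  then obtain F where F: "\<forall>j\<in>{..<k}. stratum P (int j) = box d (int j) (fst (F j)) (snd (F j)) \<and> stratum P (int j) \<noteq> {}"
    by (metis bchoice)
  define LF where "LF j = fst (F j)" for j
  define HF where "HF j = snd (F j)" for j
  have strat: "\<And>j. j < k \<Longrightarrow> stratum P (int j) = box d (int j) (LF j) (HF j)"
    using F by (auto simp: LF_def HF_def)
  have LH: "LF j l \<le> HF j l" if "j < k" "1 \<le> l" "l < d" for j l
  proof -
    have "stratum P (int j) = box d (int j) (LF j) (HF j) \<and> stratum P (int j) \<noteq> {}"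
      using F that(1) unfolding LF_def HF_def by blast
    then have "box d (int j) (LF j) (HF j) \<noteq> {}" by auto
    then show ?thesis using box_ne_iff[OF d0] that(2,3) by blast
  qed
  have Pun: "P = (\<Union>j<k. stratum P (int j))"
  proof
    show "P \<subseteq> (\<Union>j<k. stratum P (int j))"
    proof
      fix c assume c: "c \<in> P"
      then have "c!0 \<in> int ` {..<k}" using Xeq by (auto simp: X_def)
      then obtain j where "j < k" "c!0 = int j" by auto
      then show "c \<in> (\<Union>j<k. stratum P (int j))" using c by (auto simp: stratum_def)
    qed
  qed (auto simp: stratum_def)
  have SP: "\<And>j. j < k \<Longrightarrow> box d (int j) (LF j) (HF j) \<subseteq> P"
    using strat by (auto simp: stratum_def)
  have LF0: "LF 0 l = 0" if "1 \<le> l" "l < d" for l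
  proof -
    have "mkc d (\<lambda>i. if i = 0 then 0 else LF 0 i) \<in> box d 0 (LF 0) (HF 0)"
      using d0 LH k by (intro mkc_in_box) auto
    then have "mkc d (\<lambda>i. if i = 0 then 0 else LF 0 i) \<in> P" using SP[OF k] by auto
    then have 1: "0 \<le> LF 0 l" using nonneg that by force
    have "zero d \<in> stratum P (int 0)" using zP d0 by (simp add: stratum_def)
    then have "zero d \<in> box d 0 (LF 0) (HF 0)" using strat[OF k] by simp
    then have 2: "LF 0 l \<le> 0" using that by (auto simp: box_def)
    from 1 2 show ?thesis by simp
  qed
  have chain: "LF j l \<le> LF (Suc j) l \<and> LF (Suc j) l \<le> HF j l" if j: "Suc j < k" and l: "1 \<le> l" "l < d" for j l
  proof -
    define a where "a = mkc d (\<lambda>i. if i = 0 then int (Suc j) else LF (Suc j) i)"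
    have aB: "a \<in> box d (int (Suc j)) (LF (Suc j)) (HF (Suc j))"
      unfolding a_def using d0 LH j by (intro mkc_in_box) auto
    then have aP: "a \<in> P" using SP[OF j] by auto
    then have za: "(zero d, a) \<in> ?E\<^sup>*" using reach by auto
    have "a \<noteq> zero d" using d0 by (auto simp: a_def dest: arg_cong[where f = "\<lambda>c. c!0"])
    then obtain y where y: "(zero d, y) \<in> ?E\<^sup>*" "(y, a) \<in> ?E" using za by (auto elim: rtranclE)
    then obtain i where i: "i < d" "a = y[i := y!i + 1]" "length y = d" "y \<in> P"
      by (auto simp: ER_def elem_step_def)
    have ya: "\<And>m. m < d \<Longrightarrow> a!m = (if m = i then y!m + 1 else y!m)"
      using i by (auto simp: nth_list_update)
    have "i = 0"
    proof (rule ccontr)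
      assume i0: "i \<noteq> 0"
      then have "y!0 = int (Suc j)" using ya[of 0] d0 by (simp add: a_def)
      then have "y \<in> stratum P (int (Suc j))" using i by (simp add: stratum_def)
      then have "y \<in> box d (int (Suc j)) (LF (Suc j)) (HF (Suc j))" using strat[OF j] by simp
      then have "LF (Suc j) i \<le> y!i" using i0 i by (auto simp: box_def)
      moreover have "a!i = y!i + 1" using ya i by simp
      moreover have "a!i = LF (Suc j) i" using i(1) i0 by (simp add: a_def)
      ultimately show False by simp
    qed
    then have "y!0 = int j" using ya[of 0] d0 by (simp add: a_def)
    then have "y \<in> stratum P (int j)" using i by (simp add: stratum_def)
    then have "y \<in> box d (int j) (LF j) (HF j)" using strat j by simp
    moreover have "y!l = LF (Suc j) l" using ya[of l] l \<open>i = 0\<close> by (simp add: a_def)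
    ultimately show ?thesis using l by (auto simp: box_def)
  qed
  define f where "f i = (if i < (d-1)*?K then
      (if even (i mod ?K) then
         (if Suc (i mod ?K div 2) < k then nat (HF (i mod ?K div 2) (i div ?K + 1) - LF (Suc (i mod ?K div 2)) (i div ?K + 1))
          else nat (HF (i mod ?K div 2) (i div ?K + 1) - LF (i mod ?K div 2) (i div ?K + 1)))
       else nat (LF (Suc (i mod ?K div 2)) (i div ?K + 1) - LF (i mod ?K div 2) (i div ?K + 1)))
      else 0)" for i
  have K0: "0 < ?K" using k by simp
  have f_odd: "f ((l-1)*?K + 2*j + 1) = nat (LF (Suc j) l - LF j l)" if "1 \<le> l" "l < d" "Suc j < k" for l j
  proof -
    have r: "2*j+1 < ?K" using that by simp
    note dc = decode_idx[OF K0 that(1,2) r]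
    show ?thesis unfolding f_def using dc that by (simp add: add.assoc)
  qed
  have f_even: "f ((l-1)*?K + 2*j) = (if Suc j < k then nat (HF j l - LF (Suc j) l) else nat (HF j l - LF j l))"
    if "1 \<le> l" "l < d" "j < k" for l j
  proof -
    have r: "2*j < ?K" using that by simp
    note dc = decode_idx[OF K0 that(1,2) r]
    show ?thesis unfolding f_def using dc that by simp
  qed
  have LOeq: "LO k f j l = LF j l" if "1 \<le> l" "l < d" "j < k" for l j
    using that(3)
  proof (induction j)
    case 0 then show ?case using LF0 that by simp
  next
    case (Suc j)
    then show ?case using f_odd[OF that(1,2) Suc.prems] chain[OF Suc.prems that(1,2)]
      by (simp add: LO_Suc)
  qed
  have HIeq: "HI k f j l = HF j l" if "1 \<le> l" "l < d" "j < k" for l j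
  proof (cases "Suc j < k")
    case True
    then show ?thesis using LOeq[OF that] f_even[OF that] f_odd[OF that(1,2) True] chain[OF True that(1,2)]
      by (simp add: HI_def)
  next
    case False
    then show ?thesis using LOeq[OF that] f_even[OF that] LH[OF that(3,1,2)]
      by (simp add: HI_def)
  qed
  have "PP d k f = P"
  proof -
    have "PP d k f = (\<Union>j<k. box d (int j) (LF j) (HF j))"
      unfolding PP_def
      by (rule SUP_cong) (auto intro!: box_cong simp: LOeq HIeq)
    also have "\<dots> = P" using Pun strat by simp
    finally show ?thesis .
  qed
  moreover have "\<forall>i\<ge>(d-1)*?K. f i = 0" by (simp add: f_def)
  ultimately show ?thesis by metis
qed



lemma tr_len[simp]: "length v = d \<Longrightarrow> length c = d \<Longrightarrow> length (translate v c) = d"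
  by (simp add: translate_def)

lemma tr_nth: "length v = d \<Longrightarrow> length c = d \<Longrightarrow> i < d \<Longrightarrow> translate v c ! i = c!i + v!i"
  by (simp add: translate_def)

lemma tr_tr:
  assumes "length v = d" "length w = d" "length c = d"
  shows "translate w (translate v c) = translate (map2 (+) v w) c"
  using assms by (intro nth_equalityI) (simp_all add: translate_def)

lemma tr_zero: "length c = d \<Longrightarrow> translate (zero d) c = c"
  by (intro nth_equalityI) (simp_all add: translate_def zero_def)

lemma tr_neg:
  assumes "length v = d" "length c = d"
  shows "translate v (translate (map uminus v) c) = c"
  using assms by (intro nth_equalityI) (simp_all add: translate_def)

lemma rtrancl_map_gen:
  assumes "(a, b) \<in> R\<^sup>*" "\<And>x y. (x, y) \<in> R \<Longrightarrow> (g x, g y) \<in> S"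
  shows "(g a, g b) \<in> S\<^sup>*"
  using assms(1)
proof (induction rule: rtrancl_induct)
  case base then show ?case by simp
next
  case (step y z)
  then show ?case using assms(2) by (blast intro: rtrancl_into_rtrancl)
qed

lemma face_adj_tr:
  assumes "length v = d" "face_adj d a b"
  shows "face_adj d (translate v a) (translate v b)"
proof -
  from assms(2) obtain i where i: "length a = d" "length b = d" "i < d" "\<bar>a!i - b!i\<bar> = 1"
    "\<forall>j<d. j \<noteq> i \<longrightarrow> a!j = b!j" unfolding face_adj_def by blast
  show ?thesis unfolding face_adj_def
    using i assms(1) by (intro conjI tr_len exI[where x = i]) (auto simp: tr_nth)
qed

lemma elem_step_tr:
  assumes "length v = d" "elem_step d a b"
  shows "elem_step d (translate v a) (translate v b)"
proof -
  from assms(2) obtain i where i: "length a = d" "i < d" "b = a[i := a!i + 1]"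
    unfolding elem_step_def by blast
  have "translate v b = (translate v a)[i := translate v a ! i + 1]"
    using i assms(1) by (intro nth_equalityI) (auto simp: tr_nth nth_list_update)
  then show ?thesis unfolding elem_step_def using i assms(1) by auto
qed

lemma directed_tr:
  assumes "length v = d" "directed d r P" "P \<subseteq> cells d"
  shows "directed d (translate v r) (translate v ` P)"
  unfolding directed_ER
proof (intro conjI ballI)
  show "translate v r \<in> translate v ` P" using assms(2) by (simp add: directed_ER)
  fix c' assume "c' \<in> translate v ` P"
  then obtain c where c: "c \<in> P" "c' = translate v c" by auto
  have "(r, c) \<in> (ER d P)\<^sup>*" using assms(2) c by (simp add: directed_ER)
  then show "(translate v r, c') \<in> (ER d (translate v ` P))\<^sup>*"
    unfolding c(2)
    by (rule rtrancl_map_gen) (auto simp: ER_def intro: elem_step_tr[OF assms(1)])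
qed

lemma box_tr:
  assumes "length v = d" "0 < d"
  shows "translate v ` box d x lo hi = box d (x + v!0) (\<lambda>i. lo i + v!i) (\<lambda>i. hi i + v!i)"
proof
  show "translate v ` box d x lo hi \<subseteq> box d (x + v!0) (\<lambda>i. lo i + v!i) (\<lambda>i. hi i + v!i)"
  proof
    fix c' assume "c' \<in> translate v ` box d x lo hi"
    then obtain c where c: "c \<in> box d x lo hi" "c' = translate v c" by auto
    show "c' \<in> box d (x + v!0) (\<lambda>i. lo i + v!i) (\<lambda>i. hi i + v!i)"
      using c assms by (auto simp: box_def tr_nth)
  qed
  show "box d (x + v!0) (\<lambda>i. lo i + v!i) (\<lambda>i. hi i + v!i) \<subseteq> translate v ` box d x lo hi"
  proof
    fix c' assume c': "c' \<in> box d (x + v!0) (\<lambda>i. lo i + v!i) (\<lambda>i. hi i + v!i)"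
    define c where "c = translate (map uminus v) c'"
    have lc: "length c' = d" using c' by (simp add: box_def)
    have "c \<in> box d x lo hi"
      using c' assms lc by (auto simp: box_def tr_nth c_def)
    moreover have "c' = translate v c" unfolding c_def using tr_neg[OF assms(1) lc] by simp
    ultimately show "c' \<in> translate v ` box d x lo hi" by blast
  qed
qed

lemma A_tr:
  assumes v: "length v = d" and d0: "0 < d" and P: "directed_plateau_polyhypercube d P"
  shows "directed_plateau_polyhypercube d (translate v ` P)"
    "width (translate v ` P) = width P"
    "lateral_area d (translate v ` P) = lateral_area d P"
proof -
  have fin: "finite P" and cel: "P \<subseteq> cells d" and ne: "P \<noteq> {}"
    using P by (auto simp: directed_plateau_polyhypercube_def directed_polyhypercube_def polyhypercube_def)
  obtain r where r: "directed d r P"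
    using P by (auto simp: directed_plateau_polyhypercube_def directed_polyhypercube_def)
  have len: "\<And>c. c \<in> P \<Longrightarrow> length c = d" using cel by (auto simp: cells_def)
  have dir': "directed d (translate v r) (translate v ` P)" by (rule directed_tr[OF v r cel])
  have cel': "translate v ` P \<subseteq> cells d" using len v by (auto simp: cells_def)
  have proj0: "(\<lambda>c. c!0) ` translate v ` P = (\<lambda>x. x + v!0) ` ((\<lambda>c. c!0) ` P)"
    unfolding image_image using len v d0 by (intro image_cong) (auto simp: tr_nth)
  show "width (translate v ` P) = width P"
    unfolding width_def proj0 by (rule card_image) (simp add: inj_on_def)
  have "plateau d x' (stratum (translate v ` P) x')" if x': "x' \<in> (\<lambda>c. c!0) ` translate v ` P" for x'
  proof -
    obtain x where x: "x \<in> (\<lambda>c. c!0) ` P" "x' = x + v!0" using x' proj0 by auto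
    have "plateau d x (stratum P x)" using P x(1) by (auto simp: directed_plateau_polyhypercube_def)
    then obtain lo hi where S: "stratum P x = box d x lo hi" "stratum P x \<noteq> {}"
      unfolding plateau_box by blast
    have eq1: "stratum (translate v ` P) x' = translate v ` stratum P x"
      unfolding stratum_def x(2) using len v d0 by (auto simp: tr_nth)
    also have "\<dots> = box d x' (\<lambda>i. lo i + v!i) (\<lambda>i. hi i + v!i)"
      unfolding S(1) box_tr[OF v d0] x(2) ..
    finally have eq2: "stratum (translate v ` P) x' = box d x' (\<lambda>i. lo i + v!i) (\<lambda>i. hi i + v!i)" .
    have "stratum (translate v ` P) x' \<noteq> {}" using eq1 S(2) by simp
    then show ?thesis unfolding plateau_box using eq2 by blast
  qed
  moreover have "polyhypercube d (translate v ` P)"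
    by (rule directed_imp_polyhypercube[OF dir']) (use fin cel' in auto)
  ultimately show "directed_plateau_polyhypercube d (translate v ` P)"
    unfolding directed_plateau_polyhypercube_def directed_polyhypercube_def using dir' by blast
  have "card ((\<lambda>c. (c!0, c!l)) ` translate v ` P) = card ((\<lambda>c. (c!0, c!l)) ` P)"
    if l: "l \<in> {1..<d}" for l
  proof -
    have "(\<lambda>c. (c!0, c!l)) ` translate v ` P = (\<lambda>(a, b). (a + v!0, b + v!l)) ` ((\<lambda>c. (c!0, c!l)) ` P)"
      unfolding image_image using len v d0 l by (intro image_cong) (auto simp: tr_nth)
    also have "card \<dots> = card ((\<lambda>c. (c!0, c!l)) ` P)"
      by (rule card_image) (auto simp: inj_on_def)
    finally show ?thesis .
  qed
  then show "lateral_area d (translate v ` P) = lateral_area d P"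
    unfolding lateral_area_def by (rule sum.cong[OF refl])
qed

lemma nonneg_zero_rooted:
  assumes "directed d (zero d) P" "c \<in> P" "i < d"
  shows "0 \<le> c!i"
  using ER_mono[of "zero d" c d P] assms by (auto simp: directed_ER)



lemma zero_rooted_unique:
  assumes d0: "0 < d" and v: "length v = d"
    and P: "directed d (zero d) P" "P \<subseteq> cells d"
    and Q: "directed d (zero d) (translate v ` P)"
  shows "translate v ` P = P"
proof -
  have len: "\<And>c. c \<in> P \<Longrightarrow> length c = d" using P(2) by (auto simp: cells_def)
  have zQ: "zero d \<in> translate v ` P" using Q by (simp add: directed_ER)
  then obtain c where c: "c \<in> P" "translate v c = zero d" by auto
  have zP: "zero d \<in> P" using P by (simp add: directed_ER)
  have "v = zero d"
  proof (rule nth_equalityI)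
    show "length v = length (zero d)" using v by simp
    fix i assume "i < length v"
    then have i: "i < d" using v by simp
    have "c!i + v!i = 0" using arg_cong[OF c(2), of "\<lambda>x. x!i"] i len[OF c(1)] v by (simp add: tr_nth)
    moreover have "0 \<le> c!i" using nonneg_zero_rooted[OF P(1) c(1) i] .
    moreover have "0 \<le> translate v (zero d) ! i"
      using nonneg_zero_rooted[OF Q _ i] zP by blast
    then have "0 \<le> v!i" using i v by (simp add: tr_nth)
    ultimately show "v!i = zero d ! i" using i by simp
  qed
  then show ?thesis using len by (simp add: tr_zero)
qed

lemma class_tr:
  assumes w: "length w = d" and P: "P \<subseteq> cells d"
  shows "transl_rel d `` {P} = transl_rel d `` {translate w ` P}"
proof -
  have len: "\<And>c. c \<in> P \<Longrightarrow> length c = d" using P by (auto simp: cells_def)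
  show ?thesis
  proof (rule set_eqI)
    fix Y
    show "Y \<in> transl_rel d `` {P} \<longleftrightarrow> Y \<in> transl_rel d `` {translate w ` P}"
    proof
      assume "Y \<in> transl_rel d `` {P}"
      then obtain u where u: "length u = d" "Y = translate u ` P" by (auto simp: transl_rel_def)
      define u' where "u' = map2 (+) (map uminus w) u"
      have lu': "length u' = d" using u w by (simp add: u'_def)
      have eqY: "translate u' ` translate w ` P = translate u ` P"
        unfolding image_image
      proof (rule image_cong[OF refl])
        fix c assume "c \<in> P"
        then have lc: "length c = d" by (rule len)
        show "translate u' (translate w c) = translate u c"
          using lc u w by (intro nth_equalityI) (simp_all add: u'_def tr_nth)
      qed
      have "Y = translate u' ` (translate w ` P)" using eqY u by simp
      then show "Y \<in> transl_rel d `` {translate w ` P}"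
        unfolding transl_rel_def Image_singleton_iff using lu' by blast
    next
      assume "Y \<in> transl_rel d `` {translate w ` P}"
      then obtain u where u: "length u = d" "Y = translate u ` translate w ` P" by (auto simp: transl_rel_def)
      have "Y = translate (map2 (+) w u) ` P"
        unfolding u(2) image_image using len u w by (intro image_cong) (simp_all add: tr_tr)
      moreover have "length (map2 (+) w u) = d" using u w by simp
      ultimately show "Y \<in> transl_rel d `` {P}"
        unfolding transl_rel_def Image_singleton_iff by blast
    qed
  qed
qed

lemma quot_card:
  fixes k n :: nat
  assumes d0: "0 < d"
  defines "A \<equiv> {P. directed_plateau_polyhypercube d P \<and> width P = k \<and> lateral_area d P = n}"
  shows "card (A // transl_rel d) = card {P \<in> A. directed d (zero d) P}"
proof -
  let ?R = "transl_rel d"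
  let ?S = "{P \<in> A. directed d (zero d) P}"
  have cellsA: "\<And>P. P \<in> A \<Longrightarrow> P \<subseteq> cells d"
    by (auto simp: A_def directed_plateau_polyhypercube_def directed_polyhypercube_def polyhypercube_def)
  have trA: "\<And>P v. P \<in> A \<Longrightarrow> length v = d \<Longrightarrow> translate v ` P \<in> A"
    using A_tr d0 by (auto simp: A_def)
  have selfR: "\<And>P. P \<in> A \<Longrightarrow> P \<in> ?R `` {P}"
  proof -
    fix P assume "P \<in> A"
    then have H: "\<forall>c\<in>P. translate (zero d) c = c" using cellsA[of P] by (auto simp: tr_zero cells_def)
    have "translate (zero d) ` P = id ` P" using H by (intro image_cong) auto
    then have "translate (zero d) ` P = P" by simp
    then show "P \<in> ?R `` {P}" unfolding transl_rel_def by (auto intro!: exI[where x = "zero d"])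
  qed
  have "bij_betw (\<lambda>P. ?R `` {P}) ?S (A // ?R)"
    unfolding bij_betw_def
  proof
    show "inj_on (\<lambda>P. ?R `` {P}) ?S"
    proof (rule inj_onI)
      fix P Q assume P: "P \<in> ?S" and Q: "Q \<in> ?S" and eq: "?R `` {P} = ?R `` {Q}"
      have "Q \<in> ?R `` {P}" using selfR[of Q] Q eq by auto
      then obtain v where v: "length v = d" "Q = translate v ` P" by (auto simp: transl_rel_def)
      show "P = Q" using zero_rooted_unique[OF d0 v(1), of P] P Q v(2) cellsA by auto
    qed
    show "(\<lambda>P. ?R `` {P}) ` ?S = A // ?R"
    proof
      show "(\<lambda>P. ?R `` {P}) ` ?S \<subseteq> A // ?R" by (auto intro: quotientI)
      show "A // ?R \<subseteq> (\<lambda>P. ?R `` {P}) ` ?S"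
      proof
        fix X assume "X \<in> A // ?R"
        then obtain P where P: "P \<in> A" "X = ?R `` {P}" by (auto elim: quotientE)
        obtain r where r: "directed d r P"
          using P(1) by (auto simp: A_def directed_plateau_polyhypercube_def directed_polyhypercube_def)
        have lr: "length r = d" using r cellsA[OF P(1)] by (auto simp: directed_def cells_def)
        let ?w = "map uminus r"
        have lw: "length ?w = d" using lr by simp
        have "translate ?w r = zero d"
          using lr by (intro nth_equalityI) (simp_all add: tr_nth zero_def)
        then have "directed d (zero d) (translate ?w ` P)"
          using directed_tr[OF lw r cellsA[OF P(1)]] by simp
        then have "translate ?w ` P \<in> ?S" using trA[OF P(1) lw] by simp
        moreover have "X = ?R `` {translate ?w ` P}" using P(2) class_tr[OF lw cellsA[OF P(1)]] by simp
        ultimately show "X \<in> (\<lambda>P. ?R `` {P}) ` ?S" by blast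
      qed
    qed
  qed
  then show ?thesis by (rule bij_betw_same_card[symmetric])
qed

theorem theorem3:
  fixes d k n :: nat
  assumes "d \<ge> 3" and "k \<ge> 1" and "n \<ge> (d - 1) * k"
  shows "p_count d k n = ((n + (d - 1) * k - d) choose (n - (d - 1) * k))"
proof -
  have d0: "0 < d" and d2: "2 \<le> d" and k0: "0 < k" using assms by auto
  define A where "A = {P. directed_plateau_polyhypercube d P \<and> width P = k \<and> lateral_area d P = n}"
  define S where "S = {P \<in> A. directed d (zero d) P}"
  define M where "M = (d-1)*(2*k-1)"
  define N where "N = n - (d-1)*k"
  have "p_count d k n = card (A // transl_rel d)" by (simp add: p_count_def A_def)
  also have "\<dots> = card S" unfolding S_def A_def by (rule quot_card[OF d0])
  also have "\<dots> = card (WC M N)"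
  proof (rule bij_betw_same_card[symmetric])
    show "bij_betw (PP d k) (WC M N) S"
      unfolding bij_betw_def
    proof
      show "inj_on (PP d k) (WC M N)"
        by (rule inj_onI) (rule PP_inj[OF d0 k0], auto simp: WC_def M_def)
      show "PP d k ` WC M N = S"
      proof
        show "PP d k ` WC M N \<subseteq> S"
        proof
          fix P assume "P \<in> PP d k ` WC M N"
          then obtain f where f: "f \<in> WC M N" "P = PP d k f" by auto
          have "lateral_area d P = n"
            using f area_PP[OF k0, of d f] d0 assms(3) by (simp add: WC_def M_def N_def)
          then show "P \<in> S" using f dpp_PP[OF k0 d0] width_PP[OF d0] directed_PP[OF d0 k0]
            by (simp add: S_def A_def)
        qed
        show "S \<subseteq> PP d k ` WC M N"
        proof
          fix P assume P: "P \<in> S"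
          have PA: "directed_plateau_polyhypercube d P" "directed d (zero d) P" "width P = k"
            using P by (auto simp: S_def A_def)
          obtain f where f: "\<forall>i\<ge>M. f i = 0" "P = PP d k f"
            using PP_surj[OF d2 k0 PA] unfolding M_def by blast
          have "n = (d-1)*k + sum f {..<M}"
            using P f(2) area_PP[OF k0, of d f] d0 by (simp add: S_def A_def M_def)
          then have "sum f {..<M} = N" by (simp add: N_def)
          then have "f \<in> WC M N" using f(1) by (simp add: WC_def)
          then show "P \<in> PP d k ` WC M N" using f(2) by blast
        qed
      qed
    qed
  qed
  also have "\<dots> = (n + (d - 1) * k - d) choose (n - (d - 1) * k)"
  proof -
    define p where "p = (d-1)*k"
    have pm: "d - 1 \<le> p" using k0 by (simp add: p_def)
    have M2: "M = 2*p - (d-1)" unfolding M_def p_def by (simp add: diff_mult_distrib2 algebra_simps)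
    have Mpos: "M = Suc (M - 1)" using M2 pm d2 by simp
    have "card (WC M N) = (N + (M - 1)) choose N"
      by (subst Mpos) (rule card_WC)
    also have "N + (M - 1) = n + (d-1)*k - d"
      using M2 pm d2 assms(3) unfolding N_def p_def[symmetric] by simp
    finally show ?thesis by (simp add: N_def)
  qed
  finally show ?thesis .
qed

end
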